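(* Let $X$ be an idempotent unital commutative semiring whose intrinsic order is linear, i.e. $x\le y$ or $y\le x$ for all $x,y\in X$. Then $X$ is Frobenius.
   Context: A semiring $(X,+,0,\cdot)$: $(X,+,0)$ commutative monoid, $(X,\cdot)$ semigroup, distributivity, $0$ absorbing. Idempotent: $x+x=x$ for all $x$. Intrinsic order: $a\le b$ iff $a+x=b$ for some $x\in X$. $X$ is Frobenius if $(x+y)^n=x^n+y^n$ for all $x,y\in X$ and all integers $n\ge1$. *)

theory Defs
  imports Main
begin

text \<open>Commutative unital semirings are modelled by the sort
  {comm_semiring_0, comm_monoid_mult} (so 0 = 1 is not excluded).\<close>

definition idempotent_semiring :: "'a::{comm_semiring_0, comm_monoid_mult} itself \<Rightarrow> bool" where
  "idempotent_semiring _ \<longleftrightarrow> (\<forall>x::'a. x + x = x)"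

definition intrinsic_le :: "'a::comm_monoid_add \<Rightarrow> 'a \<Rightarrow> bool" where
  "intrinsic_le a b \<longleftrightarrow> (\<exists>x. a + x = b)"

definition frobenius :: "'a::{comm_semiring_0, comm_monoid_mult} itself \<Rightarrow> bool" where
  "frobenius _ \<longleftrightarrow> (\<forall>(x::'a) y (n::nat). n \<ge> 1 \<longrightarrow> (x + y) ^ n = x ^ n + y ^ n)"

end

theory Submission
  imports Defs
begin

lemma pow_le:
  fixes x y :: "'a::{comm_semiring_0, comm_monoid_mult}"
  assumes idem: "\<And>z::'a. z + z = z" and xy: "x + y = y"
  shows "x ^ n + y ^ n = y ^ n"
proof (induction n)
  case 0 then show ?case using idem by simp
next
  case (Suc n)
  have a: "x * x^n + x * y^n = x * y^n"
    using Suc by (metis distrib_left)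
  have b: "x * y^n + y * y^n = y * y^n"
    using xy by (metis distrib_right)
  have "x * x^n + y * y^n = x * x^n + (x * y^n + y * y^n)" using b by simp
  also have "\<dots> = (x * x^n + x * y^n) + y * y^n" by (simp add: add.assoc)
  also have "\<dots> = y * y^n" using a b by simp
  finally show ?case by simp
qed

theorem proposition3p2:
  assumes "idempotent_semiring TYPE('a::{comm_semiring_0, comm_monoid_mult})"
    and "\<forall>x y::'a. intrinsic_le x y \<or> intrinsic_le y x"
  shows "frobenius TYPE('a)"
proof -
  have idem: "\<And>z::'a. z + z = z" using assms(1) unfolding idempotent_semiring_def by blast
  have le: "x + y = y" if h: "intrinsic_le x y" for x y :: 'a
  proof -
    obtain z where "x + z = y" using h unfolding intrinsic_le_def by blast
    then have "x + y = (x + x) + z" by (simp add: add.assoc)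
    then show ?thesis using idem \<open>x + z = y\<close> by simp
  qed
  have main: "(x + y) ^ n = x ^ n + y ^ n" if "x + y = y" for x y :: 'a and n
    using pow_le[OF idem that, of n] that by simp
  show ?thesis unfolding frobenius_def
  proof (intro allI impI)
    fix x y :: 'a and n :: nat
    from assms(2) have "intrinsic_le x y \<or> intrinsic_le y x" by blast
    then show "(x + y) ^ n = x ^ n + y ^ n"
    proof
      assume "intrinsic_le x y" then show ?thesis using main le by blast
    next
      assume "intrinsic_le y x"
      then have "(y + x) ^ n = y ^ n + x ^ n" using main le by blast
      then show ?thesis by (simp add: add.commute)
    qed
  qed
qed

end
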